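(* Let $n=5$, $I_1=\{1,2,3,4\}$, $I_2=\{1,2,3,5\}$, and $f=f_1+f_2$ with $$f_1=x_4^2(x_1^4x_2^2+x_2^4x_3^2+x_1^2x_3^4-3x_1^2x_2^2x_3^2)+x_3^8,\qquad f_2=x_1^2x_2^2x_3^2x_5^2.$$ Let $H_1:=(x_1^2+x_2^2+x_3^2+x_4^2)(x_1^2+x_2^2+x_3^2)$ and $H_2:=(x_1^2+x_2^2+x_3^2+x_5^2)(x_1^2+x_2^2+x_3^2)$. Then: (1) $f$ is a nonnegative form of degree $8$ which is not positive definite; (2) there are no $\sigma_1\in\Sigma[x(I_1)]$, $\sigma_2\in\Sigma[x(I_2)]$ with $f=\sigma_1+\sigma_2$; but there exist $\sigma_1\in\Sigma[x(I_1)]_6$, $\sigma_2\in\Sigma[x(I_2)]_6$ with $f=\sigma_1/H_1+\sigma_2/H_2$.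
   Context: For $T\subseteq\{1,\dots,n\}$, $x(T)=(x_i)_{i\in T}$; $\Sigma[x(T)]$ is the set of sums of squares of polynomials in the variables $x(T)$, and $\Sigma[x(T)]_t$ those sums of squares of polynomials of degree at most $t$. A form is positive definite if it is positive at every nonzero point. *)

theory Defs
  imports Complex_Main
begin

text \<open>Points are functions nat => real; variable x_i is x i. Polynomials are
represented as polynomial functions (faithful over the infinite field R).\<close>

definition poly_deg_in :: "nat set \<Rightarrow> nat \<Rightarrow> ((nat \<Rightarrow> real) \<Rightarrow> real) \<Rightarrow> bool" where
  "poly_deg_in T t p \<longleftrightarrow> (\<exists>A c. finite A \<and>
      (\<forall>\<alpha>\<in>A. (\<forall>i. i \<notin> T \<longrightarrow> \<alpha> i = 0) \<and> (\<Sum>i\<in>T. \<alpha> i) \<le> t) \<and>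
      (\<forall>x. p x = (\<Sum>\<alpha>\<in>A. c \<alpha> * (\<Prod>i\<in>T. x i ^ \<alpha> i))))"

definition poly_in :: "nat set \<Rightarrow> ((nat \<Rightarrow> real) \<Rightarrow> real) \<Rightarrow> bool" where
  "poly_in T p \<longleftrightarrow> (\<exists>t. poly_deg_in T t p)"

definition sos_in :: "nat set \<Rightarrow> ((nat \<Rightarrow> real) \<Rightarrow> real) \<Rightarrow> bool" where
  "sos_in T \<sigma> \<longleftrightarrow> (\<exists>ps. (\<forall>p\<in>set ps. poly_in T p) \<and> (\<forall>x. \<sigma> x = (\<Sum>p\<leftarrow>ps. (p x)\<^sup>2)))"

definition sos_deg_in :: "nat set \<Rightarrow> nat \<Rightarrow> ((nat \<Rightarrow> real) \<Rightarrow> real) \<Rightarrow> bool" where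
  "sos_deg_in T t \<sigma> \<longleftrightarrow> (\<exists>ps. (\<forall>p\<in>set ps. poly_deg_in T t p) \<and> (\<forall>x. \<sigma> x = (\<Sum>p\<leftarrow>ps. (p x)\<^sup>2)))"

definition form_of_degree :: "nat set \<Rightarrow> nat \<Rightarrow> ((nat \<Rightarrow> real) \<Rightarrow> real) \<Rightarrow> bool" where
  "form_of_degree V d p \<longleftrightarrow> (\<exists>x. p x \<noteq> 0) \<and> (\<exists>A c. finite A \<and>
      (\<forall>\<alpha>\<in>A. (\<forall>i. i \<notin> V \<longrightarrow> \<alpha> i = 0) \<and> (\<Sum>i\<in>V. \<alpha> i) = d) \<and>
      (\<forall>x. p x = (\<Sum>\<alpha>\<in>A. c \<alpha> * (\<Prod>i\<in>V. x i ^ \<alpha> i))))"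

definition nonneg_form :: "((nat \<Rightarrow> real) \<Rightarrow> real) \<Rightarrow> bool" where
  "nonneg_form p \<longleftrightarrow> (\<forall>x. p x \<ge> 0)"

definition pos_def_form :: "nat set \<Rightarrow> ((nat \<Rightarrow> real) \<Rightarrow> real) \<Rightarrow> bool" where
  "pos_def_form V p \<longleftrightarrow> (\<forall>x. (\<exists>i\<in>V. x i \<noteq> 0) \<longrightarrow> p x > 0)"

definition f1 :: "(nat \<Rightarrow> real) \<Rightarrow> real" where
  "f1 x = (x 4)\<^sup>2 * ((x 1)^4 * (x 2)^2 + (x 2)^4 * (x 3)^2 + (x 1)^2 * (x 3)^4
            - 3 * (x 1)^2 * (x 2)^2 * (x 3)^2) + (x 3)^8"

definition f2 :: "(nat \<Rightarrow> real) \<Rightarrow> real" where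
  "f2 x = (x 1)^2 * (x 2)^2 * (x 3)^2 * (x 5)^2"

definition f :: "(nat \<Rightarrow> real) \<Rightarrow> real" where
  "f x = f1 x + f2 x"

definition H1 :: "(nat \<Rightarrow> real) \<Rightarrow> real" where
  "H1 x = ((x 1)^2 + (x 2)^2 + (x 3)^2 + (x 4)^2) * ((x 1)^2 + (x 2)^2 + (x 3)^2)"

definition H2 :: "(nat \<Rightarrow> real) \<Rightarrow> real" where
  "H2 x = ((x 1)^2 + (x 2)^2 + (x 3)^2 + (x 5)^2) * ((x 1)^2 + (x 2)^2 + (x 3)^2)"

end

theory Submission
  imports Defs "HOL-Computational_Algebra.Polynomial"
begin


definition rep :: "nat set \<Rightarrow> nat set \<Rightarrow> ((nat \<Rightarrow> real) \<Rightarrow> real) \<Rightarrow> bool" where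
  "rep T D p \<longleftrightarrow> (\<exists>L::(real \<times> (nat \<Rightarrow> nat)) list.
     (\<forall>ce\<in>set L. (\<forall>i. i \<notin> T \<longrightarrow> snd ce i = 0) \<and> sum (snd ce) T \<in> D) \<and>
     (\<forall>x. p x = (\<Sum>ce\<leftarrow>L. fst ce * (\<Prod>i\<in>T. x i ^ snd ce i))))"

lemma conc_sum: "(\<Sum>ce\<leftarrow>concat (map (\<lambda>c1. map (\<lambda>c2. m c1 c2) L2) L1). k ce) = (\<Sum>c1\<leftarrow>L1. \<Sum>c2\<leftarrow>L2. (k (m c1 c2)::real))"
  by (induction L1) (auto simp: o_def)

lemma my_sumlist_concat_map:
  "sum_list (map f (concat (map g L))) = (\<Sum>y\<leftarrow>L. sum_list (map f (g y)))"
  by (induction L) auto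

lemma my_sumlist_prod:
  fixes f :: "'a \<Rightarrow> real" and g :: "'b \<Rightarrow> real"
  shows "sum_list (map f A) * sum_list (map g B) = sum_list (map (\<lambda>a. sum_list (map (\<lambda>b. f a * g b) B)) A)"
  by (induction A) (auto simp: algebra_simps sum_list_const_mult)

lemma rep_const: "rep T {0} (\<lambda>x. c)"
  unfolding rep_def
  by (rule exI[of _ "[(c, \<lambda>i. 0)]"]) auto

lemma rep_var: assumes "i \<in> T" "finite T" shows "rep T {1} (\<lambda>x. x i)"
  unfolding rep_def
proof (rule exI[of _ "[(1, \<lambda>j. if j = i then 1 else 0)]"], intro conjI allI ballI)
  fix x :: "nat \<Rightarrow> real"
  have "(\<Prod>j\<in>T. x j ^ (if j = i then 1 else 0)) = (\<Prod>j\<in>T. if j = i then x j else 1)"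
    by (rule prod.cong) auto
  also have "\<dots> = x i" using assms by (simp add: prod.delta)
  finally show "x i = (\<Sum>ce\<leftarrow>[(1::real, \<lambda>j. if j = i then 1 else 0)]. fst ce * (\<Prod>i\<in>T. x i ^ snd ce i))"
    by simp
qed (use assms in \<open>auto simp: sum.delta\<close>)

lemma rep_add: assumes "rep T D p" "rep T D q" shows "rep T D (\<lambda>x. p x + q x)"
proof -
  obtain L1 where L1: "\<forall>ce\<in>set L1. (\<forall>i. i \<notin> T \<longrightarrow> snd ce i = 0) \<and> sum (snd ce) T \<in> D"
    "\<forall>x. p x = (\<Sum>ce\<leftarrow>L1. fst ce * (\<Prod>i\<in>T. x i ^ snd ce i))" using assms(1) unfolding rep_def by blast
  obtain L2 where L2: "\<forall>ce\<in>set L2. (\<forall>i. i \<notin> T \<longrightarrow> snd ce i = 0) \<and> sum (snd ce) T \<in> D"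
    "\<forall>x. q x = (\<Sum>ce\<leftarrow>L2. fst ce * (\<Prod>i\<in>T. x i ^ snd ce i))" using assms(2) unfolding rep_def by blast
  show ?thesis unfolding rep_def
    by (rule exI[of _ "L1 @ L2"]) (use L1 L2 in auto)
qed

lemma rep_scale: assumes "rep T D p" shows "rep T D (\<lambda>x. a * p x)"
proof -
  obtain L1 where L1: "\<forall>ce\<in>set L1. (\<forall>i. i \<notin> T \<longrightarrow> snd ce i = 0) \<and> sum (snd ce) T \<in> D"
    "\<forall>x. p x = (\<Sum>ce\<leftarrow>L1. fst ce * (\<Prod>i\<in>T. x i ^ snd ce i))" using assms(1) unfolding rep_def by blast
  show ?thesis unfolding rep_def
    by (rule exI[of _ "map (\<lambda>ce. (a * fst ce, snd ce)) L1"])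
      (use L1 in \<open>auto simp: o_def sum_list_const_mult[symmetric] mult.assoc\<close>)
qed

lemma rep_diff: assumes "rep T D p" "rep T D q" shows "rep T D (\<lambda>x. p x - q x)"
  using rep_add[OF assms(1) rep_scale[OF assms(2), of "-1"]] by simp

lemma rep_divc: assumes "rep T D p" shows "rep T D (\<lambda>x. p x / c)"
proof -
  have "(\<lambda>x. p x / c) = (\<lambda>x. 1/c * p x)" by auto
  then show ?thesis using rep_scale[OF assms, of "1/c"] by simp
qed

lemma rep_mult0: assumes "rep T {a} p" "rep T {b} q" shows "rep T {a+b} (\<lambda>x. p x * q x)"
proof -
  obtain L1 where L1: "\<forall>ce\<in>set L1. (\<forall>i. i \<notin> T \<longrightarrow> snd ce i = 0) \<and> sum (snd ce) T \<in> {a}"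
    "\<forall>x. p x = (\<Sum>ce\<leftarrow>L1. fst ce * (\<Prod>i\<in>T. x i ^ snd ce i))" using assms(1) unfolding rep_def by blast
  obtain L2 where L2: "\<forall>ce\<in>set L2. (\<forall>i. i \<notin> T \<longrightarrow> snd ce i = 0) \<and> sum (snd ce) T \<in> {b}"
    "\<forall>x. q x = (\<Sum>ce\<leftarrow>L2. fst ce * (\<Prod>i\<in>T. x i ^ snd ce i))" using assms(2) unfolding rep_def by blast
  define L where "L = concat (map (\<lambda>c1. map (\<lambda>c2. (fst c1 * fst c2, \<lambda>i. snd c1 i + snd c2 i)) L2) L1)"
  show ?thesis unfolding rep_def
  proof (rule exI[of _ L], intro conjI allI)
    show "\<forall>ce\<in>set L. (\<forall>i. i \<notin> T \<longrightarrow> snd ce i = 0) \<and> sum (snd ce) T \<in> {a + b}"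
      using L1(1) L2(1) unfolding L_def by (auto simp: sum.distrib)
  next
    fix x :: "nat \<Rightarrow> real"
    have "p x * q x = (\<Sum>c1\<leftarrow>L1. \<Sum>c2\<leftarrow>L2. (fst c1 * (\<Prod>i\<in>T. x i ^ snd c1 i)) * (fst c2 * (\<Prod>i\<in>T. x i ^ snd c2 i)))"
      using L1(2) L2(2) my_sumlist_prod[where f="\<lambda>c1. fst c1 * (\<Prod>i\<in>T. x i ^ snd c1 i)" and A=L1 and g="\<lambda>c2. fst c2 * (\<Prod>i\<in>T. x i ^ snd c2 i)" and B=L2] by simp
    also have "\<dots> = (\<Sum>c1\<leftarrow>L1. \<Sum>c2\<leftarrow>L2. fst c1 * fst c2 * (\<Prod>i\<in>T. x i ^ (snd c1 i + snd c2 i)))"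
      by (simp add: power_add prod.distrib algebra_simps)
    also have "\<dots> = (\<Sum>ce\<leftarrow>L. fst ce * (\<Prod>i\<in>T. x i ^ snd ce i))"
      unfolding L_def conc_sum by simp
    finally show "p x * q x = (\<Sum>ce\<leftarrow>L. fst ce * (\<Prod>i\<in>T. x i ^ snd ce i))" .
  qed
qed

lemma rep_mult: assumes "rep T {a} p" "rep T {b} q" "c = a + b" shows "rep T {c} (\<lambda>x. p x * q x)"
  using rep_mult0[OF assms(1,2)] assms(3) by simp

lemma rep_pow0: assumes "rep T {a} p" shows "rep T {n*a} (\<lambda>x. p x ^ n)"
proof (induction n)
  case 0 then show ?case using rep_const[of T 1] by simp
next
  case (Suc n) then show ?case using rep_mult0[OF assms Suc] by (simp add: add.commute)
qed

lemma rep_pow: assumes "rep T {a} p" "c = n * a" shows "rep T {c} (\<lambda>x. p x ^ n)"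
  using rep_pow0[OF assms(1)] assms(2) by simp

lemma rep_mono: "rep T D p \<Longrightarrow> D \<subseteq> D' \<Longrightarrow> rep T D' p"
  unfolding rep_def by blast

lemma my_sum_sumlist_swap:
  "(\<Sum>a\<in>A. \<Sum>ce\<leftarrow>L. g a ce) = (\<Sum>ce\<leftarrow>L. \<Sum>a\<in>A. (g a ce :: real))"
  by (induction L) (auto simp: sum.distrib)

lemma rep_to_A:
  assumes "rep T D p"
  shows "\<exists>A c. finite A \<and> (\<forall>\<alpha>\<in>A. (\<forall>i. i \<notin> T \<longrightarrow> \<alpha> i = 0) \<and> sum \<alpha> T \<in> D) \<and>
      (\<forall>x. p x = (\<Sum>\<alpha>\<in>A. c \<alpha> * (\<Prod>i\<in>T. x i ^ \<alpha> i)))"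
proof -
  obtain L where L: "\<forall>ce\<in>set L. (\<forall>i. i \<notin> T \<longrightarrow> snd ce i = 0) \<and> sum (snd ce) T \<in> D"
    "\<forall>x. p x = (\<Sum>ce\<leftarrow>L. fst ce * (\<Prod>i\<in>T. x i ^ snd ce i))" using assms unfolding rep_def by blast
  define A where "A = snd ` set L"
  define c where "c \<alpha> = (\<Sum>ce\<leftarrow>L. if snd ce = \<alpha> then fst ce else 0)" for \<alpha>
  show ?thesis
  proof (intro exI conjI allI ballI)
    show "finite A" unfolding A_def by simp
    fix x
    have "(\<Sum>\<alpha>\<in>A. c \<alpha> * (\<Prod>i\<in>T. x i ^ \<alpha> i)) =
        (\<Sum>\<alpha>\<in>A. \<Sum>ce\<leftarrow>L. if snd ce = \<alpha> then fst ce * (\<Prod>i\<in>T. x i ^ snd ce i) else 0)"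
      unfolding c_def sum_list_mult_const[symmetric]
      by (intro sum.cong refl arg_cong[where f=sum_list] map_cong) auto
    also have "\<dots> = (\<Sum>ce\<leftarrow>L. \<Sum>\<alpha>\<in>A. if snd ce = \<alpha> then fst ce * (\<Prod>i\<in>T. x i ^ snd ce i) else 0)"
      by (rule my_sum_sumlist_swap)
    also have "\<dots> = (\<Sum>ce\<leftarrow>L. fst ce * (\<Prod>i\<in>T. x i ^ snd ce i))"
      by (rule arg_cong[where f=sum_list], rule map_cong) (auto simp: A_def sum.delta)
    finally show "p x = (\<Sum>\<alpha>\<in>A. c \<alpha> * (\<Prod>i\<in>T. x i ^ \<alpha> i))" using L by simp
  qed (use L in \<open>auto simp: A_def\<close>)
qed

lemma rep_poly_deg_in: "rep T D p \<Longrightarrow> D \<subseteq> {..t} \<Longrightarrow> poly_deg_in T t p"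
  unfolding poly_deg_in_def by (drule rep_to_A) blast

lemma rep_form: "rep V {d} p \<Longrightarrow> (\<exists>x. p x \<noteq> 0) \<Longrightarrow> form_of_degree V d p"
  unfolding form_of_degree_def by (drule rep_to_A) blast

lemma poly_in_rep: assumes "poly_in T p" shows "rep T UNIV p"
proof -
  obtain t A c where A: "finite A" "\<forall>\<alpha>\<in>A. (\<forall>i. i \<notin> T \<longrightarrow> \<alpha> i = 0) \<and> (\<Sum>i\<in>T. \<alpha> i) \<le> t"
     "\<forall>x. p x = (\<Sum>\<alpha>\<in>A. c \<alpha> * (\<Prod>i\<in>T. x i ^ \<alpha> i))"
    using assms unfolding poly_in_def poly_deg_in_def by blast
  obtain xs where xs: "set xs = A" "distinct xs" using finite_distinct_list[OF A(1)] by blast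
  show ?thesis unfolding rep_def
  proof (rule exI[of _ "map (\<lambda>\<alpha>. (c \<alpha>, \<alpha>)) xs"], intro conjI allI ballI)
    fix x show "p x = (\<Sum>ce\<leftarrow>map (\<lambda>\<alpha>. (c \<alpha>, \<alpha>)) xs. fst ce * (\<Prod>i\<in>T. x i ^ snd ce i))"
      using A(3) xs by (simp add: o_def sum_list_distinct_conv_sum_set)
  qed (use A xs in auto)
qed

lemma rep_dep: assumes "rep T D p" "\<forall>i\<in>T. x i = y i" shows "p x = p y"
proof -
  obtain L where L: "\<forall>x. p x = (\<Sum>ce\<leftarrow>L. fst ce * (\<Prod>i\<in>T. x i ^ snd ce i))" using assms unfolding rep_def by blast
  have "(\<Sum>ce\<leftarrow>L. fst ce * (\<Prod>i\<in>T. x i ^ snd ce i)) = (\<Sum>ce\<leftarrow>L. fst ce * (\<Prod>i\<in>T. y i ^ snd ce i))"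
    using assms(2) by (intro arg_cong[where f=sum_list] map_cong refl arg_cong[where f="\<lambda>z. _ * z"] prod.cong) auto
  then show ?thesis using L by simp
qed

lemma U_deg:
  fixes P :: "real poly"
  assumes "\<forall>t. t \<ge> 1 \<longrightarrow> (poly P t)^2 \<le> A * t^(2*m)"
  shows "degree P \<le> m"
proof (rule ccontr)
  assume "\<not> degree P \<le> m"
  hence dm: "m < degree P" by simp
  define Q where "Q = P * P - monom A (2*m)"
  have P0: "P \<noteq> 0" using dm by auto
  have dPP: "degree (P*P) = 2 * degree P" using P0 by (simp add: degree_mult_eq)
  have cQ: "coeff Q (2 * degree P) = (lead_coeff P)^2"
    unfolding Q_def using dm coeff_mult_degree_sum[of P P] by (simp add: coeff_monom power2_eq_square mult_2)
  have dm2: "degree (monom A (2*m)) \<le> 2 * degree P" using degree_monom_le[of A "2*m"] dm by linarith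
  have dQ: "degree Q \<le> 2 * degree P"
    unfolding Q_def using dm2 dPP by (simp add: degree_diff_le)
  have lc: "lead_coeff P \<noteq> 0" using P0 by simp
  have "coeff Q (2 * degree P) \<noteq> 0" using cQ lc by simp
  hence "degree Q = 2 * degree P" using dQ le_degree antisym by blast
  hence lQ: "lead_coeff Q > 0" using cQ lc by simp
  obtain n where n: "\<forall>x\<ge>n. poly Q x \<ge> lead_coeff Q" using poly_pinfty_gt_lc[OF lQ] by blast
  define x where "x = max n 1"
  have x1: "x \<ge> n" "x \<ge> 1" by (auto simp: x_def)
  have "poly Q x > 0" using n x1 lQ by force
  moreover have "poly Q x \<le> 0" using assms[rule_format, OF x1(2)]
    by (simp add: Q_def poly_monom power2_eq_square)
  ultimately show False by simp
qed

lemma L_low: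
  fixes P :: "real poly"
  assumes "\<forall>t. t \<noteq> 0 \<longrightarrow> (poly P t)^2 \<le> A * t^(2*m)"
  shows "\<forall>i<m. coeff P i = 0"
  using assms
proof (induction m arbitrary: P)
  case 0
  then show ?case by simp
next
  case (Suc m)
  have lim1: "((\<lambda>t. (poly P t)^2) \<longlongrightarrow> (poly P 0)^2) (at 0)"
    by (intro tendsto_intros)
  have lim2: "((\<lambda>t. A * t^(2*Suc m)) \<longlongrightarrow> A * 0^(2*Suc m)) (at (0::real))"
    by (intro tendsto_intros)
  have ev: "eventually (\<lambda>t. (poly P t)^2 \<le> A * t^(2*Suc m)) (at (0::real))"
    unfolding eventually_at_filter by (rule always_eventually) (use Suc.prems in auto)
  have "(poly P 0)^2 \<le> A * 0^(2*Suc m)"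
    using tendsto_le[OF _ lim2 lim1 ev] by simp
  hence "(poly P 0)^2 \<le> 0" by simp
  hence p0: "poly P 0 = 0" by (metis power2_less_eq_zero_iff)
  obtain a Q where PQ: "P = pCons a Q" by (cases P)
  have a0: "a = 0" using p0 PQ by simp
  have "\<forall>t. t \<noteq> 0 \<longrightarrow> (poly Q t)^2 \<le> A * t^(2*m)"
  proof (intro allI impI)
    fix t :: real assume t: "t \<noteq> 0"
    have e1: "(poly P t)^2 = t^2 * (poly Q t)^2" using PQ a0 by (simp add: power_mult_distrib)
    have e2: "A * t^(2*Suc m) = t^2 * (A * t^(2*m))" by (simp add: power2_eq_square mult_ac)
    have "t^2 * (poly Q t)^2 \<le> t^2 * (A * t^(2*m))"
      using Suc.prems[rule_format, OF t] by (simp only: e1 e2)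
    moreover have "t^2 > 0" using t by simp
    ultimately show "(poly Q t)^2 \<le> A * t^(2*m)" by simp
  qed
  from Suc.IH[OF this] have "\<forall>i<m. coeff Q i = 0" .
  then show ?case using PQ a0 by (auto simp: less_Suc_eq_0_disj)
qed
lemma poly_le3:
  fixes P :: "real poly"
  assumes "degree P \<le> n"
  shows "poly P t = (\<Sum>i\<le>n. coeff P i * t^i)"
proof -
  have "poly P t = poly (\<Sum>i\<le>n. monom (coeff P i) i) t" using poly_as_sum_of_monoms'[OF assms] by simp
  also have "\<dots> = (\<Sum>i\<le>n. coeff P i * t^i)" by (simp add: poly_sum poly_monom)
  finally show ?thesis .
qed

lemma ID1: "(\<forall>x::real. (\<Sum>i\<le>N. c i * x^i) = 0) \<Longrightarrow> \<forall>i\<le>N. c i = 0"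
  using polyfun_eq_0 by blast

lemma ID3:
  fixes D :: "nat \<Rightarrow> nat \<Rightarrow> nat \<Rightarrow> real"
  assumes "\<forall>u v w. (\<Sum>i\<le>N. \<Sum>j\<le>N. \<Sum>k\<le>N. D i j k * u^i * v^j * w^k) = 0"
  shows "\<forall>i\<le>N. \<forall>j\<le>N. \<forall>k\<le>N. D i j k = 0"
proof -
  have s1: "\<forall>v w. \<forall>i\<le>N. (\<Sum>j\<le>N. \<Sum>k\<le>N. D i j k * v^j * w^k) = 0"
  proof (rule allI, rule allI)
    fix v w :: real
    have "\<forall>u::real. (\<Sum>i\<le>N. (\<Sum>j\<le>N. \<Sum>k\<le>N. D i j k * v^j * w^k) * u^i) = 0"
    proof
      fix u :: real
      have "(\<Sum>i\<le>N. (\<Sum>j\<le>N. \<Sum>k\<le>N. D i j k * v^j * w^k) * u^i) = (\<Sum>i\<le>N. \<Sum>j\<le>N. \<Sum>k\<le>N. D i j k * u^i * v^j * w^k)"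
        by (simp add: sum_distrib_left sum_distrib_right mult_ac)
      then show "(\<Sum>i\<le>N. (\<Sum>j\<le>N. \<Sum>k\<le>N. D i j k * v^j * w^k) * u^i) = 0" using assms by simp
    qed
    then show "\<forall>i\<le>N. (\<Sum>j\<le>N. \<Sum>k\<le>N. D i j k * v^j * w^k) = 0" by (rule ID1)
  qed
  have s2: "\<forall>w. \<forall>i\<le>N. \<forall>j\<le>N. (\<Sum>k\<le>N. D i j k * w^k) = 0"
  proof (intro allI impI)
    fix w :: real and i j assume i: "i \<le> N" and j: "j \<le> N"
    have "\<forall>v::real. (\<Sum>j\<le>N. (\<Sum>k\<le>N. D i j k * w^k) * v^j) = 0"
    proof
      fix v :: real
      have "(\<Sum>j\<le>N. (\<Sum>k\<le>N. D i j k * w^k) * v^j) = (\<Sum>j\<le>N. \<Sum>k\<le>N. D i j k * v^j * w^k)"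
        by (simp add: sum_distrib_left sum_distrib_right mult_ac)
      then show "(\<Sum>j\<le>N. (\<Sum>k\<le>N. D i j k * w^k) * v^j) = 0" using s1 i by simp
    qed
    then show "(\<Sum>k\<le>N. D i j k * w^k) = 0" using ID1[of "\<lambda>j. \<Sum>k\<le>N. D i j k * w^k" N] j by blast
  qed
  show ?thesis
  proof (intro allI impI)
    fix i j k assume "i \<le> N" "j \<le> N" "k \<le> N"
    then show "D i j k = 0" using s2 ID1[of "D i j" N] by blast
  qed
qed



definition S3 :: "real \<Rightarrow> real \<Rightarrow> real \<Rightarrow> real" where
  "S3 u v w = u^4*v^2 + v^4*w^2 + u^2*w^4 - 3*u^2*v^2*w^2"

lemma S3_scale: "S3 (s*u) (s*v) (s*w) = S3 u v w * s^(2*3)"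
  unfolding S3_def by (simp add: power_mult_distrib algebra_simps eval_nat_numeral)

lemma Qlem:
  fixes a b :: real
  assumes "\<forall>u. (a*u^2 + b*u)^2 \<le> u^2"
  shows "a = 0"
proof (rule ccontr)
  assume a: "a \<noteq> 0"
  define u where "u = (\<bar>b\<bar>+2)/a"
  have au: "a*u = \<bar>b\<bar>+2" using a by (simp add: u_def)
  have u0: "u \<noteq> 0" using a by (simp add: u_def)
  have "a*u^2 + b*u = u*(a*u) + b*u" by (simp add: power2_eq_square)
  also have "\<dots> = u*(\<bar>b\<bar>+2+b)" by (simp add: au algebra_simps)
  finally have e: "a*u^2 + b*u = u*(\<bar>b\<bar>+2+b)" .
  have g: "\<bar>b\<bar>+2+b \<ge> 2" by simp
  have "(\<bar>b\<bar>+2+b)^2 \<ge> 2^2" using g by (intro power_mono) auto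
  hence "u^2 * (\<bar>b\<bar>+2+b)^2 \<ge> u^2 * 4" by (intro mult_left_mono) auto
  moreover have "u^2 > 0" using u0 by simp
  moreover have "(a*u^2 + b*u)^2 = u^2 * (\<bar>b\<bar>+2+b)^2" unfolding e by (simp add: power_mult_distrib)
  ultimately show False using assms[rule_format, of u] by linarith
qed

lemma atMost3: "{..3::nat} = {0,1,2,3}" by auto

lemma R3:
  fixes G :: "nat \<Rightarrow> nat \<Rightarrow> nat \<Rightarrow> real"
  assumes N: "3 \<le> N" and z: "\<And>i j k. i \<le> N \<Longrightarrow> j \<le> N \<Longrightarrow> k \<le> N \<Longrightarrow> i + j + k \<noteq> 3 \<Longrightarrow> G i j k = 0"
  shows "(\<Sum>i\<le>N. \<Sum>j\<le>N. \<Sum>k\<le>N. G i j k) = (\<Sum>i\<le>3. \<Sum>j\<le>3. \<Sum>k\<le>3. G i j k)"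
proof -
  have sub: "{..3} \<subseteq> {..N}" using N by auto
  have k: "(\<Sum>k\<le>N. G i j k) = (\<Sum>k\<le>3. G i j k)" if "i \<le> N" "j \<le> N" for i j
    by (rule sum.mono_neutral_right[OF _ sub]) (use that in \<open>auto intro!: z\<close>)
  have j: "(\<Sum>j\<le>N. \<Sum>k\<le>3. G i j k) = (\<Sum>j\<le>3. \<Sum>k\<le>3. G i j k)" if "i \<le> N" for i
    by (rule sum.mono_neutral_right[OF _ sub]) (use that N in \<open>auto intro!: sum.neutral z\<close>)
  have i: "(\<Sum>i\<le>N. \<Sum>j\<le>3. \<Sum>k\<le>3. G i j k) = (\<Sum>i\<le>3. \<Sum>j\<le>3. \<Sum>k\<le>3. G i j k)"
    by (rule sum.mono_neutral_right[OF _ sub]) (use N in \<open>auto intro!: sum.neutral z\<close>)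
  have "(\<Sum>i\<le>N. \<Sum>j\<le>N. \<Sum>k\<le>N. G i j k) = (\<Sum>i\<le>N. \<Sum>j\<le>N. \<Sum>k\<le>3. G i j k)"
    by (intro sum.cong refl k) auto
  also have "\<dots> = (\<Sum>i\<le>N. \<Sum>j\<le>3. \<Sum>k\<le>3. G i j k)"
    by (intro sum.cong refl j) auto
  also have "\<dots> = (\<Sum>i\<le>3. \<Sum>j\<le>3. \<Sum>k\<le>3. G i j k)" by (rule i)
  finally show ?thesis .
qed

lemma K:
  fixes C :: "nat \<Rightarrow> nat \<Rightarrow> nat \<Rightarrow> real" and F :: "real \<Rightarrow> real \<Rightarrow> real \<Rightarrow> real"
  assumes F: "\<And>u v w. F u v w = (\<Sum>i\<le>N. \<Sum>j\<le>N. \<Sum>k\<le>N. C i j k * u^i * v^j * w^k)"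
    and N: "3 \<le> N" and bnd: "\<And>u v w. (F u v w)^2 \<le> S3 u v w"
  shows "F u v w = 0"
proof -
  have hom: "F (t*u) (t*v) (t*w) = t^3 * F u v w" for t u v w
  proof -
    define P where "P = (\<Sum>i\<le>N. \<Sum>j\<le>N. \<Sum>k\<le>N. monom (C i j k * u^i*v^j*w^k) (i+j+k))"
    have Pev: "poly P s = F (s*u) (s*v) (s*w)" for s
      by (simp add: P_def F poly_sum poly_monom power_mult_distrib power_add mult_ac)
    have b: "(poly P s)^2 \<le> S3 u v w * s^(2*3)" for s
      using bnd[of "s*u" "s*v" "s*w"] by (simp add: Pev S3_scale)
    have dP: "degree P \<le> 3" by (rule U_deg) (use b in auto)
    have lP: "\<forall>i<3. coeff P i = 0" by (rule L_low) (use b in auto)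
    have "poly P s = coeff P 3 * s^3" for s
      using poly_le3[OF dP, of s] lP by (simp add: atMost3)
    from this[of t] this[of 1] show ?thesis by (simp add: Pev)
  qed
  have z2: "\<forall>u v w. (\<Sum>i\<le>N. \<Sum>j\<le>N. \<Sum>k\<le>N. (C i j k * (2^(i+j+k) - 8)) * u^i * v^j * w^k) = 0"
  proof (intro allI)
    fix u v w :: real
    have "(\<Sum>i\<le>N. \<Sum>j\<le>N. \<Sum>k\<le>N. (C i j k * (2^(i+j+k) - 8)) * u^i * v^j * w^k)
        = F (2*u) (2*v) (2*w) - 8 * F u v w"
      by (simp add: F sum_distrib_left sum_subtractf[symmetric] power_mult_distrib power_add algebra_simps)
    also have "\<dots> = 0" using hom[of 2 u v w] by simp
    finally show "(\<Sum>i\<le>N. \<Sum>j\<le>N. \<Sum>k\<le>N. (C i j k * (2^(i+j+k) - 8)) * u^i * v^j * w^k) = 0" .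
  qed
  have Cz: "C i j k = 0" if "i + j + k \<noteq> 3" "i \<le> N" "j \<le> N" "k \<le> N" for i j k
  proof -
    have "C i j k * (2^(i+j+k) - 8) = 0" using ID3[OF z2] that by blast
    moreover have "(2::real)^(i+j+k) \<noteq> 2^3"
      using that(1) by (subst power_inject_exp) auto
    ultimately show ?thesis by simp
  qed
  define E where "E u v w = C 3 0 0 * u^3 + C 0 3 0 * v^3 + C 0 0 3 * w^3 + C 2 1 0*u^2*v + C 2 0 1 * u^2*w
     + C 1 2 0*u*v^2 + C 0 2 1*v^2*w + C 1 0 2*u*w^2 + C 0 1 2 * v*w^2 + C 1 1 1*u*v*w" for u v w
  have FE: "F u v w = E u v w" for u v w
  proof -
    have "F u v w = (\<Sum>i\<le>3. \<Sum>j\<le>3. \<Sum>k\<le>3. C i j k * u^i * v^j * w^k)"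
      unfolding F by (rule R3[OF N]) (use Cz in \<open>auto\<close>)
    also have "\<dots> = E u v w"
      using N by (simp add: atMost3 E_def Cz algebra_simps)
    finally show ?thesis .
  qed
  have c300: "C 3 0 0 = 0" using bnd[of 1 0 0] by (simp add: FE E_def S3_def)
  have c030: "C 0 3 0 = 0" using bnd[of 0 1 0] by (simp add: FE E_def S3_def)
  have c003: "C 0 0 3 = 0" using bnd[of 0 0 1] by (simp add: FE E_def S3_def)
  have c201: "C 2 0 1 = 0"
  proof (rule Qlem[where b="C 1 0 2"], rule allI)
    fix u show "(C 2 0 1 * u\<^sup>2 + C 1 0 2 * u)\<^sup>2 \<le> u\<^sup>2"
      using bnd[of u 0 1] by (simp add: FE E_def S3_def c300 c003 mult_ac)
  qed
  have c120: "C 1 2 0 = 0"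
  proof (rule Qlem[where b="C 2 1 0"], rule allI)
    fix u show "(C 1 2 0 * u\<^sup>2 + C 2 1 0 * u)\<^sup>2 \<le> u\<^sup>2"
      using bnd[of 1 u 0] by (simp add: FE E_def S3_def c300 c030 mult_ac add.commute)
  qed
  have c012: "C 0 1 2 = 0"
  proof (rule Qlem[where b="C 0 2 1"], rule allI)
    fix u show "(C 0 1 2 * u\<^sup>2 + C 0 2 1 * u)\<^sup>2 \<le> u\<^sup>2"
      using bnd[of 0 1 u] by (simp add: FE E_def S3_def c030 c003 mult_ac add.commute)
  qed
  have z: "F a b c = 0" if "S3 a b c = 0" for a b c
    using bnd[of a b c] that by simp
  have e1: "C 2 1 0 + C 0 2 1 + C 1 0 2 + C 1 1 1 = 0"
    using z[of 1 1 1] c300 c030 c003 c201 c120 c012 by (simp add: S3_def FE E_def)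
  have e2: "C 2 1 0 + C 0 2 1 - C 1 0 2 - C 1 1 1 = 0"
    using z[of "-1" 1 1] c300 c030 c003 c201 c120 c012 by (simp add: S3_def FE E_def)
  have e3: "- C 2 1 0 + C 0 2 1 + C 1 0 2 - C 1 1 1 = 0"
    using z[of 1 "-1" 1] c300 c030 c003 c201 c120 c012 by (simp add: S3_def FE E_def)
  have e4: "C 2 1 0 - C 0 2 1 + C 1 0 2 - C 1 1 1 = 0"
    using z[of 1 1 "-1"] c300 c030 c003 c201 c120 c012 by (simp add: S3_def FE E_def)
  have "C 2 1 0 = 0" "C 0 2 1 = 0" "C 1 0 2 = 0" "C 1 1 1 = 0" using e1 e2 e3 e4 by linarith+
  then show ?thesis using c300 c030 c003 c201 c120 c012 by (simp add: FE E_def)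
qed



lemma delta3:
  fixes c u v w :: real
  assumes "a1 \<le> N" "a2 \<le> N" "a3 \<le> N"
  shows "(\<Sum>i\<le>N. \<Sum>j\<le>N. \<Sum>k\<le>N. (if a1 = i \<and> a2 = j \<and> a3 = k then c else 0) * u^i * v^j * w^k)
      = c * u^a1 * v^a2 * w^a3"
proof -
  have e: "(if a1 = i \<and> a2 = j \<and> a3 = k then c else 0) * u^i * v^j * w^k =
     (if i = a1 then (if j = a2 then (if k = a3 then c * u^a1 * v^a2 * w^a3 else 0) else 0) else 0)" for i j k
    by auto
  define X where "X = c * u^a1 * v^a2 * w^a3"
  have k: "(\<Sum>k\<le>N. if i = a1 then (if j = a2 then (if k = a3 then X else 0) else 0) else 0)
      = (if i = a1 then (if j = a2 then X else 0) else 0)" for i j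
    using assms by (cases "i = a1"; cases "j = a2") simp_all
  have j: "(\<Sum>j\<le>N. if i = a1 then (if j = a2 then X else 0) else 0) = (if i = a1 then X else 0)" for i
    using assms by (cases "i = a1") simp_all
  show ?thesis unfolding e X_def[symmetric] k j using assms by simp
qed

definition Cof :: "(real \<times> (nat \<Rightarrow> nat)) list \<Rightarrow> nat \<Rightarrow> nat \<Rightarrow> nat \<Rightarrow> real" where
  "Cof M i j k = (\<Sum>ce\<leftarrow>M. if snd ce 1 = i \<and> snd ce 2 = j \<and> snd ce 3 = k then fst ce else 0)"

lemma TriL:
  assumes "\<forall>ce\<in>set M. snd ce 1 \<le> N \<and> snd ce 2 \<le> N \<and> snd ce 3 \<le> N"
  shows "(\<Sum>ce\<leftarrow>M. fst ce * u^(snd ce 1) * v^(snd ce 2) * w^(snd ce 3))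
     = (\<Sum>i\<le>N. \<Sum>j\<le>N. \<Sum>k\<le>N. Cof M i j k * u^i * v^j * w^k)"
  using assms
proof (induction M)
  case Nil
  then show ?case by (simp add: Cof_def)
next
  case (Cons a M)
  have "(\<Sum>i\<le>N. \<Sum>j\<le>N. \<Sum>k\<le>N. Cof (a # M) i j k * u^i * v^j * w^k)
     = (\<Sum>i\<le>N. \<Sum>j\<le>N. \<Sum>k\<le>N. (if snd a 1 = i \<and> snd a 2 = j \<and> snd a 3 = k then fst a else 0) * u^i * v^j * w^k)
       + (\<Sum>i\<le>N. \<Sum>j\<le>N. \<Sum>k\<le>N. Cof M i j k * u^i * v^j * w^k)"
    by (simp add: Cof_def sum.distrib algebra_simps)
  also have "\<dots> = fst a * u^(snd a 1) * v^(snd a 2) * w^(snd a 3) + (\<Sum>i\<le>N. \<Sum>j\<le>N. \<Sum>k\<le>N. Cof M i j k * u^i * v^j * w^k)"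
    using Cons.prems by (subst delta3) auto
  finally show ?case using Cons by simp
qed

lemma Tri:
  fixes M :: "(real \<times> (nat \<Rightarrow> nat)) list"
  shows "\<exists>C N. 3 \<le> N \<and> (\<forall>u v w. (\<Sum>ce\<leftarrow>M. fst ce * u^(snd ce 1) * v^(snd ce 2) * w^(snd ce 3))
        = (\<Sum>i\<le>N. \<Sum>j\<le>N. \<Sum>k\<le>N. C i j k * u^i * v^j * w^k))"
proof -
  define N where "N = 3 + (\<Sum>ce\<leftarrow>M. snd ce 1 + snd ce 2 + snd ce 3)"
  have "\<forall>ce\<in>set M. snd ce 1 \<le> N \<and> snd ce 2 \<le> N \<and> snd ce 3 \<le> N"
  proof
    fix ce assume "ce \<in> set M"
    then have "snd ce 1 + snd ce 2 + snd ce 3 \<le> (\<Sum>ce\<leftarrow>M. snd ce 1 + snd ce 2 + snd ce 3)"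
      using member_le_sum_list[of "snd ce 1 + snd ce 2 + snd ce 3" "map (\<lambda>ce. snd ce 1 + snd ce 2 + snd ce 3) M"] by auto
    then show "snd ce 1 \<le> N \<and> snd ce 2 \<le> N \<and> snd ce 3 \<le> N" unfolding N_def by linarith
  qed
  moreover have "3 \<le> N" unfolding N_def by simp
  ultimately show ?thesis using TriL[of M N] by blast
qed



lemma sumlist_poly: "poly (sum_list (map g M)) t = sum_list (map (\<lambda>a. poly (g a) t) M)"
  by (induction M) auto

lemma sumlist_diff: "(\<Sum>a\<leftarrow>L. g1 a) - (\<Sum>a\<leftarrow>L. g2 a) = (\<Sum>a\<leftarrow>L. g1 a - g2 a :: real)"
  by (induction L) auto

lemma line4:
  assumes "rep {1,2,3,4} D p"
  shows "\<exists>M::(real \<times> (nat \<Rightarrow> nat)) list. \<forall>x t. p (x(4:=t)) =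
     (\<Sum>ce\<leftarrow>M. fst ce * x 1^snd ce 1 * x 2^snd ce 2 * x 3^snd ce 3 * t^snd ce 4)"
proof -
  obtain L where L: "\<forall>x. p x = (\<Sum>ce\<leftarrow>L. fst ce * (\<Prod>i\<in>{1,2,3,4}. x i ^ snd ce i))"
    using assms unfolding rep_def by blast
  show ?thesis by (rule exI[of _ L]) (simp add: L mult_ac)
qed

lemma LinP:
  assumes "rep {1,2,3,4} D p" and bnd: "\<forall>x. (p x)^2 \<le> f1 x"
  shows "p (x(4:=t)) = p (x(4:=0)) + t * (p (x(4:=1)) - p (x(4:=0)))"
proof -
  obtain M :: "(real \<times> (nat \<Rightarrow> nat)) list" where M: "\<forall>x t. p (x(4:=t)) =
     (\<Sum>ce\<leftarrow>M. fst ce * x 1^snd ce 1 * x 2^snd ce 2 * x 3^snd ce 3 * t^snd ce 4)"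
    using line4[OF assms(1)] by blast
  define P where "P = sum_list (map (\<lambda>ce. monom (fst ce * x 1^snd ce 1 * x 2^snd ce 2 * x 3^snd ce 3) (snd ce 4)) M)"
  have Pe: "poly P s = p (x(4:=s))" for s
    by (simp add: P_def sumlist_poly poly_monom M o_def)
  have f1e: "f1 (x(4:=s)) = s^2 * S3 (x 1) (x 2) (x 3) + x 3^8" for s
    by (simp add: f1_def S3_def)
  have b: "(poly P s)^2 \<le> (\<bar>S3 (x 1) (x 2) (x 3)\<bar> + x 3^8) * s^(2*1)" if s: "s \<ge> 1" for s
  proof -
    have "(poly P s)^2 \<le> s^2 * S3 (x 1) (x 2) (x 3) + x 3^8"
      using bnd[rule_format, of "x(4:=s)"] by (simp add: Pe f1e)
    moreover have "s^2 * S3 (x 1) (x 2) (x 3) \<le> s^2 * \<bar>S3 (x 1) (x 2) (x 3)\<bar>"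
      by (intro mult_left_mono) auto
    moreover have "x 3^8 \<le> x 3^8 * s^2"
    proof -
      have "1 \<le> s^2" using s by (simp add: one_le_power)
      moreover have "0 \<le> x 3^8" by (simp add: zero_le_even_power)
      ultimately show ?thesis using mult_left_mono[of 1 "s^2" "x 3^8"] by simp
    qed
    moreover have "(\<bar>S3 (x 1) (x 2) (x 3)\<bar> + x 3^8) * s^(2*1) = s^2 * \<bar>S3 (x 1) (x 2) (x 3)\<bar> + x 3^8 * s^2"
      by (simp add: algebra_simps power2_eq_square)
    ultimately show ?thesis by linarith
  qed
  have dP: "degree P \<le> 1" by (rule U_deg) (use b in auto)
  have pl: "poly P s = coeff P 0 + coeff P 1 * s" for s
    using poly_le3[OF dP, of s] by simp
  show ?thesis using pl[of t] pl[of 0] pl[of 1] by (simp add: Pe)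
qed

lemma BZ:
  assumes "rep {1,2,3,4} D p"
    and bnd: "\<forall>x. (p (x(4:=1)) - p (x(4:=0)))^2 \<le> S3 (x 1) (x 2) (x 3)"
  shows "p (x(4:=1)) - p (x(4:=0)) = 0"
proof -
  obtain M :: "(real \<times> (nat \<Rightarrow> nat)) list" where M: "\<forall>x t. p (x(4:=t)) =
     (\<Sum>ce\<leftarrow>M. fst ce * x 1^snd ce 1 * x 2^snd ce 2 * x 3^snd ce 3 * t^snd ce 4)"
    using line4[OF assms(1)] by blast
  define M' where "M' = map (\<lambda>ce. (fst ce * (1 - 0^snd ce 4), snd ce)) M"
  have de: "p (y(4:=1)) - p (y(4:=0)) =
      (\<Sum>ce\<leftarrow>M'. fst ce * y 1^snd ce 1 * y 2^snd ce 2 * y 3^snd ce 3)" for y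
    unfolding M[rule_format] M'_def by (simp add: sumlist_diff o_def algebra_simps)
  obtain C N where CN: "3 \<le> N" "\<forall>u v w. (\<Sum>ce\<leftarrow>M'. fst ce * u^(snd ce 1) * v^(snd ce 2) * w^(snd ce 3))
        = (\<Sum>i\<le>N. \<Sum>j\<le>N. \<Sum>k\<le>N. C i j k * u^i * v^j * w^k)"
    using Tri[of M'] by blast
  define F where "F u v w = (\<Sum>i\<le>N. \<Sum>j\<le>N. \<Sum>k\<le>N. C i j k * u^i * v^j * w^k)" for u v w
  have dF: "p (y(4:=1)) - p (y(4:=0)) = F (y 1) (y 2) (y 3)" for y
    unfolding de F_def using CN(2) by simp
  have Fb: "(F u v w)^2 \<le> S3 u v w" for u v w
  proof -
    define y :: "nat \<Rightarrow> real" where "y i = (if i = 1 then u else if i = 2 then v else w)" for i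
    show ?thesis using bnd[rule_format, of y] by (simp add: dF y_def)
  qed
  have "F (x 1) (x 2) (x 3) = 0" by (rule K[OF F_def CN(1) Fb])
  then show ?thesis by (simp add: dF)
qed

lemma sum_sq_nonneg: "0 \<le> (\<Sum>q\<leftarrow>ps. (q x)^2 :: real)"
  by (induction ps) auto

lemma sq_le_sum: "p \<in> set ps \<Longrightarrow> (p x)^2 \<le> (\<Sum>q\<leftarrow>ps. (q x)^2 :: real)"
  by (induction ps) (auto intro: add_increasing2 add_increasing sum_sq_nonneg)

lemma sq_le_sum2: "p \<in> set ps \<Longrightarrow> (g p)^2 \<le> (\<Sum>q\<leftarrow>ps. (g q)^2 :: real)"
proof (induction ps)
  case (Cons a ps)
  have "0 \<le> (\<Sum>q\<leftarrow>ps. (g q)^2)" by (induction ps) auto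
  then show ?case using Cons by (auto intro: add_increasing2 add_increasing)
qed simp

lemma comb: "(\<Sum>p\<leftarrow>ps. (a p + b p)^2) + (\<Sum>p\<leftarrow>ps. (a p - b p)^2) - 2 * (\<Sum>p\<leftarrow>ps. (a p)^2)
   = 2 * (\<Sum>p\<leftarrow>ps. (b p)^2 :: real)"
  by (induction ps) (auto simp: algebra_simps power2_eq_square)

lemma part2:
  "\<not> (\<exists>\<sigma>1 \<sigma>2. sos_in {1,2,3,4} \<sigma>1 \<and> sos_in {1,2,3,5} \<sigma>2 \<and> (\<forall>x. f x = \<sigma>1 x + \<sigma>2 x))"
proof
  assume "\<exists>\<sigma>1 \<sigma>2. sos_in {1,2,3,4} \<sigma>1 \<and> sos_in {1,2,3,5} \<sigma>2 \<and> (\<forall>x. f x = \<sigma>1 x + \<sigma>2 x)"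
  then obtain \<sigma>1 \<sigma>2 ps rs where
    ps: "\<forall>p\<in>set ps. poly_in {1,2,3,4} p" "\<forall>x. \<sigma>1 x = (\<Sum>p\<leftarrow>ps. (p x)^2)" and
    rs: "\<forall>p\<in>set rs. poly_in {1,2,3,5} p" "\<forall>x. \<sigma>2 x = (\<Sum>p\<leftarrow>rs. (p x)^2)" and
    fe: "\<forall>x. f x = \<sigma>1 x + \<sigma>2 x"
    unfolding sos_in_def by blast
  have psr: "rep {1,2,3,4} UNIV p" if "p \<in> set ps" for p using ps(1) that poly_in_rep by blast
  have rsr: "rep {1,2,3,5} UNIV p" if "p \<in> set rs" for p using rs(1) that poly_in_rep by blast
  have d1: "\<sigma>1 (x(5:=a)) = \<sigma>1 x" for x a
  proof -
    have "p (x(5:=a)) = p x" if "p \<in> set ps" for p by (rule rep_dep[OF psr[OF that]]) auto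
    then show ?thesis unfolding ps(2)[rule_format]
      by (intro arg_cong[where f=sum_list] map_cong refl) (metis)
  qed
  have d2: "\<sigma>2 (x(4:=a)) = \<sigma>2 x" for x a
  proof -
    have "p (x(4:=a)) = p x" if "p \<in> set rs" for p by (rule rep_dep[OF rsr[OF that]]) auto
    then show ?thesis unfolding rs(2)[rule_format]
      by (intro arg_cong[where f=sum_list] map_cong refl) (metis)
  qed
  have s2nn: "\<sigma>2 x \<ge> 0" for x unfolding rs(2)[rule_format] by (rule sum_sq_nonneg)
  have eq1: "\<sigma>1 x = f1 x - \<sigma>2 (x(5:=0))" for x
  proof -
    have "f (x(5:=0)) = \<sigma>1 (x(5:=0)) + \<sigma>2 (x(5:=0))" using fe by blast
    moreover have "f (x(5:=0)) = f1 x" by (simp add: f_def f1_def f2_def)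
    ultimately show ?thesis using d1 by simp
  qed
  have pb: "(p x)^2 \<le> f1 x" if "p \<in> set ps" for p x
  proof -
    have "(p x)^2 \<le> \<sigma>1 x" unfolding ps(2)[rule_format] by (rule sq_le_sum[OF that])
    also have "\<dots> \<le> f1 x" using eq1[of x] s2nn[of "x(5:=0)"] by simp
    finally show ?thesis .
  qed
  define b where "b p x = p (x(4:=1)) - p (x(4:=0))" for p :: "(nat \<Rightarrow> real) \<Rightarrow> real" and x
  have lin: "p (x(4:=t)) = p (x(4:=0)) + t * b p x" if "p \<in> set ps" for p x t
    unfolding b_def by (rule LinP[OF psr[OF that]]) (use pb[OF that] in auto)
  have sumb: "(\<Sum>p\<leftarrow>ps. (b p x)^2) = S3 (x 1) (x 2) (x 3)" for x
  proof -
    have f1e: "f1 (x(4:=s)) = s^2 * S3 (x 1) (x 2) (x 3) + x 3^8" for s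
      by (simp add: f1_def S3_def)
    have s2e: "\<sigma>2 ((x(4:=s))(5:=0)) = \<sigma>2 (x(5:=0))" for s
      using d2[of "x(5:=0)" s] by (simp add: fun_upd_twist)
    have A: "\<sigma>1 (x(4:=1)) + \<sigma>1 (x(4:=-1)) - 2 * \<sigma>1 (x(4:=0)) = 2 * S3 (x 1) (x 2) (x 3)"
      by (simp add: eq1 f1e s2e)
    have "\<sigma>1 (x(4:=s)) = (\<Sum>p\<leftarrow>ps. (p (x(4:=0)) + s * b p x)^2)" for s
      unfolding ps(2)[rule_format] using lin by (intro arg_cong[where f=sum_list] map_cong refl) metis
    then have B: "\<sigma>1 (x(4:=1)) + \<sigma>1 (x(4:=-1)) - 2 * \<sigma>1 (x(4:=0)) = 2 * (\<Sum>p\<leftarrow>ps. (b p x)^2)"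
      using comb[of "\<lambda>p. p (x(4:=0))" "\<lambda>p. b p x" ps] by (simp add: algebra_simps)
    show ?thesis using A B by simp
  qed
  have bz: "b p x = 0" if "p \<in> set ps" for p x
    unfolding b_def
  proof (rule BZ[OF psr[OF that]], rule allI)
    fix y
    have "(b p y)^2 \<le> (\<Sum>p\<leftarrow>ps. (b p y)^2)" by (rule sq_le_sum2[OF that])
    then show "(p (y(4:=1)) - p (y(4:=0)))^2 \<le> S3 (y 1) (y 2) (y 3)" using sumb[of y] by (simp add: b_def)
  qed
  have "(\<Sum>p\<leftarrow>ps. (b p (\<lambda>i. real i))^2) = (\<Sum>p\<leftarrow>ps. 0)"
    by (intro arg_cong[where f=sum_list] map_cong refl) (simp add: bz)
  then have "S3 1 2 3 = 0"
    using sumb[of "\<lambda>i. real i"] by simp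
  then show False by (simp add: S3_def)
qed



lemma S3_sos: "(u^2+v^2+w^2) * S3 u v w = (u^3*v - u*v*w^2)^2 + (v^3*w - u^2*v*w)^2 + (w^3*u - u*v^2*w)^2
   + ((u^2*v^2 - v^2*w^2)/2)^2 + ((u^2*v^2 - v^2*w^2)/2)^2
   + ((v^2*w^2 - w^2*u^2)/2)^2 + ((v^2*w^2 - w^2*u^2)/2)^2
   + ((w^2*u^2 - u^2*v^2)/2)^2 + ((w^2*u^2 - u^2*v^2)/2)^2"
proof -
  have h: "2*((u^2+v^2+w^2) * (u^4*v^2 + v^4*w^2 + u^2*w^4 - 3*u^2*v^2*w^2)) = 2*((u^3*v - u*v*w^2)^2 + (v^3*w - u^2*v*w)^2 + (w^3*u - u*v^2*w)^2)
   + (u^2*v^2 - v^2*w^2)^2 + (v^2*w^2 - w^2*u^2)^2 + (w^2*u^2 - u^2*v^2)^2" by algebra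
  show ?thesis unfolding S3_def using h by (simp add: power_divide)
qed

lemma S3_nonneg: "S3 u v w \<ge> 0"
proof (cases "u^2+v^2+w^2 > 0")
  case True
  have "0 \<le> (u^2+v^2+w^2) * S3 u v w" unfolding S3_sos by simp
  then show ?thesis using True by (simp add: zero_le_mult_iff)
next
  case False
  then have "u = 0" "v = 0" "w = 0"
    by (smt (verit) power2_less_eq_zero_iff zero_le_power2)+
  then show ?thesis by (simp add: S3_def)
qed

lemmas rep_rules = rep_add rep_diff rep_mult rep_pow rep_var rep_const rep_divc

lemma f_rep: "rep {1..5} {8} f"
proof -
  have e: "f = (\<lambda>x. (x 4)^2 * ((x 1)^4 * (x 2)^2 + (x 2)^4 * (x 3)^2 + (x 1)^2 * (x 3)^4
            - 3 * (x 1)^2 * (x 2)^2 * (x 3)^2) + (x 3)^8 + (x 1)^2 * (x 2)^2 * (x 3)^2 * (x 5)^2)"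
    by (auto simp: f_def f1_def f2_def)
  show ?thesis unfolding e
    by (rule rep_rules | simp)+
qed


lemma part1: "form_of_degree {1..5} 8 f \<and> nonneg_form f \<and> \<not> pos_def_form {1..5} f"
proof (intro conjI)
  show "form_of_degree {1..5} 8 f"
  proof (rule rep_form[OF f_rep])
    show "\<exists>x. f x \<noteq> 0" by (rule exI[of _ "\<lambda>i. 1"]) (simp add: f_def f1_def f2_def)
  qed
  show "nonneg_form f" unfolding nonneg_form_def
  proof
    fix x :: "nat \<Rightarrow> real"
    have "f x = (x 4)^2 * S3 (x 1) (x 2) (x 3) + (x 3)^8 + (x 1)^2 * (x 2)^2 * (x 3)^2 * (x 5)^2"
      by (simp add: f_def f1_def f2_def S3_def)
    moreover have "0 \<le> (x 4)^2 * S3 (x 1) (x 2) (x 3)" using S3_nonneg by simp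
    moreover have "0 \<le> (x 3)^8" by (simp add: zero_le_even_power)
    moreover have "0 \<le> (x 1)^2 * (x 2)^2 * (x 3)^2 * (x 5)^2" by simp
    ultimately show "0 \<le> f x" by linarith
  qed
  show "\<not> pos_def_form {1..5} f" unfolding pos_def_form_def
  proof
    assume h: "\<forall>x. (\<exists>i\<in>{1..5}. x i \<noteq> 0) \<longrightarrow> 0 < f x"
    have "0 < f (\<lambda>i. if i = 4 then 1 else 0)" by (rule h[rule_format]) (rule bexI[of _ 4], auto)
    then show False by (simp add: f_def f1_def f2_def)
  qed
qed

definition prodl :: "((nat \<Rightarrow> real) \<Rightarrow> real) list \<Rightarrow> ((nat \<Rightarrow> real) \<Rightarrow> real) list \<Rightarrow> ((nat \<Rightarrow> real) \<Rightarrow> real) list" where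
  "prodl ps qs = concat (map (\<lambda>p. map (\<lambda>q. (\<lambda>x. p x * q x)) qs) ps)"

lemma sumsq_prodl: "(\<Sum>r\<leftarrow>prodl ps qs. (r x)^2) = (\<Sum>p\<leftarrow>ps. (p x)^2) * (\<Sum>q\<leftarrow>qs. (q x)^2)"
  by (induction ps) (auto simp: prodl_def o_def power_mult_distrib sum_list_const_mult algebra_simps)

lemma rep_prodl: "\<forall>p\<in>set ps. rep T {a} p \<Longrightarrow> \<forall>q\<in>set qs. rep T {b} q \<Longrightarrow> \<forall>r\<in>set (prodl ps qs). rep T {a+b} r"
  unfolding prodl_def by (auto intro: rep_mult0)

definition qsl :: "((nat \<Rightarrow> real) \<Rightarrow> real) list" where
  "qsl = [\<lambda>x. x 1^3*x 2 - x 1*x 2*x 3^2, \<lambda>x. x 2^3*x 3 - x 1^2*x 2*x 3, \<lambda>x. x 3^3*x 1 - x 1*x 2^2*x 3,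
     \<lambda>x. (x 1^2*x 2^2 - x 2^2*x 3^2)/2, \<lambda>x. (x 1^2*x 2^2 - x 2^2*x 3^2)/2,
     \<lambda>x. (x 2^2*x 3^2 - x 3^2*x 1^2)/2, \<lambda>x. (x 2^2*x 3^2 - x 3^2*x 1^2)/2,
     \<lambda>x. (x 3^2*x 1^2 - x 1^2*x 2^2)/2, \<lambda>x. (x 3^2*x 1^2 - x 1^2*x 2^2)/2]"

lemma qsl_sum: "(\<Sum>q\<leftarrow>qsl. (q x)^2) = (x 1^2 + x 2^2 + x 3^2) * S3 (x 1) (x 2) (x 3)"
  unfolding S3_sos by (simp add: qsl_def add.assoc)

lemma qsl_rep: "\<forall>q\<in>set qsl. rep {1,2,3,4} {4} q"
  unfolding qsl_def by simp (intro conjI; (rule rep_rules | simp)+)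

lemma part3: "\<exists>\<sigma>1 \<sigma>2. sos_deg_in {1,2,3,4} 6 \<sigma>1 \<and> sos_deg_in {1,2,3,5} 6 \<sigma>2 \<and>
            (\<forall>x. H1 x \<noteq> 0 \<and> H2 x \<noteq> 0 \<longrightarrow> f x = \<sigma>1 x / H1 x + \<sigma>2 x / H2 x)"
proof (intro exI conjI)
  define T1 :: "nat set" where "T1 = {1,2,3,4}"
  define T2 :: "nat set" where "T2 = {1,2,3,5}"
  define ls4 :: "((nat \<Rightarrow> real) \<Rightarrow> real) list" where "ls4 = [\<lambda>x. x 1, \<lambda>x. x 2, \<lambda>x. x 3, \<lambda>x. x 4]"
  define ls3 :: "((nat \<Rightarrow> real) \<Rightarrow> real) list" where "ls3 = [\<lambda>x. x 1, \<lambda>x. x 2, \<lambda>x. x 3]"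
  define ls5 :: "((nat \<Rightarrow> real) \<Rightarrow> real) list" where "ls5 = [\<lambda>x. x 1, \<lambda>x. x 2, \<lambda>x. x 3, \<lambda>x. x 5]"
  define PS1 where "PS1 = prodl ls4 (prodl [\<lambda>x. x 4] qsl @ prodl ls3 [\<lambda>x. x 3^4])"
  define PS2 where "PS2 = prodl ls5 (prodl ls3 [\<lambda>x. x 1 * x 2 * x 3 * x 5])"
  have rv1: "rep T1 {1} (\<lambda>x. x i)" if "i \<in> T1" for i by (rule rep_var) (use that in \<open>auto simp: T1_def\<close>)
  have rv2: "rep T2 {1} (\<lambda>x. x i)" if "i \<in> T2" for i by (rule rep_var) (use that in \<open>auto simp: T2_def\<close>)
  have r4: "\<forall>p\<in>set ls4. rep T1 {1} p" using rv1[of 1] rv1[of 2] rv1[of 3] rv1[of 4] unfolding ls4_def by (simp add: T1_def)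
  have r3: "\<forall>p\<in>set ls3. rep T1 {1} p" using rv1[of 1] rv1[of 2] rv1[of 3] unfolding ls3_def by (simp add: T1_def)
  have r3': "\<forall>p\<in>set ls3. rep T2 {1} p" using rv2[of 1] rv2[of 2] rv2[of 3] unfolding ls3_def by (simp add: T2_def)
  have r5: "\<forall>p\<in>set ls5. rep T2 {1} p" using rv2[of 1] rv2[of 2] rv2[of 3] rv2[of 5] unfolding ls5_def by (simp add: T2_def)
  have rx4: "\<forall>p\<in>set [\<lambda>x. x 4]. rep T1 {1} p" using rv1[of 4] by (simp add: T1_def)
  have rx34: "\<forall>p\<in>set [\<lambda>x. x 3^4]. rep T1 {4} p" unfolding T1_def by simp (rule rep_rules | simp)+
  have rm: "\<forall>p\<in>set [\<lambda>x. x 1 * x 2 * x 3 * x 5]. rep T2 {4} p" unfolding T2_def by simp (rule rep_rules | simp)+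
  have rq: "\<forall>p\<in>set qsl. rep T1 {4} p" using qsl_rep unfolding T1_def .
  have a1: "\<forall>p\<in>set (prodl [\<lambda>x. x 4] qsl @ prodl ls3 [\<lambda>x. x 3^4]). rep T1 {5} p"
    using rep_prodl[OF rx4 rq] rep_prodl[OF r3 rx34] by auto
  have P1: "\<forall>p\<in>set PS1. rep T1 {6} p" unfolding PS1_def using rep_prodl[OF r4 a1] by simp
  have P2: "\<forall>p\<in>set PS2. rep T2 {6} p" unfolding PS2_def using rep_prodl[OF r5 rep_prodl[OF r3' rm]] by simp
  show "sos_deg_in {1,2,3,4} 6 (\<lambda>x. H1 x * f1 x)"
    unfolding sos_deg_in_def
  proof (rule exI[of _ PS1], intro conjI ballI allI)
    fix p assume "p \<in> set PS1"
    then show "poly_deg_in {1,2,3,4} 6 p" using P1 rep_poly_deg_in unfolding T1_def by blast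
  next
    fix x :: "nat \<Rightarrow> real"
    have "(\<Sum>p\<leftarrow>PS1. (p x)^2) = (x 1^2 + x 2^2 + x 3^2 + x 4^2) *
       ((x 4)^2 * ((x 1^2 + x 2^2 + x 3^2) * S3 (x 1) (x 2) (x 3)) + (x 1^2 + x 2^2 + x 3^2) * (x 3^4)^2)"
      unfolding PS1_def by (simp add: sumsq_prodl qsl_sum ls4_def ls3_def add.assoc)
    also have "\<dots> = H1 x * f1 x"
    proof -
      have "f1 x = (x 4)^2 * S3 (x 1) (x 2) (x 3) + (x 3)^8" by (simp add: f1_def S3_def)
      then show ?thesis unfolding H1_def by algebra
    qed
    finally show "H1 x * f1 x = (\<Sum>p\<leftarrow>PS1. (p x)^2)" by simp
  qed
  show "sos_deg_in {1,2,3,5} 6 (\<lambda>x. H2 x * f2 x)"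
    unfolding sos_deg_in_def
  proof (rule exI[of _ PS2], intro conjI ballI allI)
    fix p assume "p \<in> set PS2"
    then show "poly_deg_in {1,2,3,5} 6 p" using P2 rep_poly_deg_in unfolding T2_def by blast
  next
    fix x :: "nat \<Rightarrow> real"
    have "(\<Sum>p\<leftarrow>PS2. (p x)^2) = (x 1^2 + x 2^2 + x 3^2 + x 5^2) *
       ((x 1^2 + x 2^2 + x 3^2) * (x 1 * x 2 * x 3 * x 5)^2)"
      unfolding PS2_def by (simp add: sumsq_prodl ls5_def ls3_def add.assoc)
    also have "\<dots> = H2 x * f2 x" unfolding H2_def f2_def by algebra
    finally show "H2 x * f2 x = (\<Sum>p\<leftarrow>PS2. (p x)^2)" by simp
  qed
  show "\<forall>x. H1 x \<noteq> 0 \<and> H2 x \<noteq> 0 \<longrightarrow> f x = H1 x * f1 x / H1 x + H2 x * f2 x / H2 x"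
    by (simp add: f_def)
qed

theorem mainTheorem8:
  shows "(form_of_degree {1..5} 8 f \<and> nonneg_form f \<and> \<not> pos_def_form {1..5} f)
       \<and> \<not> (\<exists>\<sigma>1 \<sigma>2. sos_in {1,2,3,4} \<sigma>1 \<and> sos_in {1,2,3,5} \<sigma>2 \<and> (\<forall>x. f x = \<sigma>1 x + \<sigma>2 x))
       \<and> (\<exists>\<sigma>1 \<sigma>2. sos_deg_in {1,2,3,4} 6 \<sigma>1 \<and> sos_deg_in {1,2,3,5} 6 \<sigma>2 \<and>
            (\<forall>x. H1 x \<noteq> 0 \<and> H2 x \<noteq> 0 \<longrightarrow> f x = \<sigma>1 x / H1 x + \<sigma>2 x / H2 x))"
  using part1 part2 part3 by blast


end
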